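(* Let $\mathcal{T}$ denote the bounded linear operator on the quotient space $H_{ber}^2(D)/X$ induced by the operator $\mathcal{T}:\sum_{n\ge 0} a_n z^n\mapsto \sum_{n\ge 0} a_n z^{T(n)}$ on the Bergman space, where $X=\operatorname{span}\{1,z,z^2\}$. Then $\mathcal{T}$ is surjective on $H_{ber}^2(D)/X$. Moreover, if the Collatz conjecture holds, then \[ H_{ber}^2(D)/X=\overline{\bigcup_{n=1}^{\infty}\operatorname{Ker}(\mathcal{T}^n)}. \]
   Context: $T:\mathbb{Z}\to\mathbb{Z}$ is the (reduced) Collatz map: $T(n)=\frac{3n+1}{2}$ for odd $n$ and $T(n)=\frac n2$ for even $n$. $D$ is the open unit disk. $H_{ber}^2(D)$ is the Bergman space of holomorphic functions $f$ on $D$ with $\|f\|^2=\int_D|f|^2\,dA<\infty$ (so $\|z^n\|^2=\frac{\pi}{n+1}$). The operator $\mathcal{T}f(z)=(Sf)(\sqrt z)+\sqrt z\,(Af)(z^{3/2})$, with $Sf(z)=\frac{f(z)+f(-z)}2$, $Af(z)=\frac{f(z)-f(-z)}2$, acts on power series by $\sum a_nz^n\mapsto\sum a_n z^{T(n)}$ (i.e. $\mathcal{T}z^n=z^{T(n)}$); it is a bounded operator on $H_{ber}^2(D)$ and leaves $X=\operatorname{span}\{1,z,z^2\}$ invariant, hence induces a bounded operator on the quotient Banach space $H_{ber}^2(D)/X$. The Collatz conjecture is the statement that for every positive integer $n$ there is $k\ge 0$ with $T^k(n)=1$. *)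

theory Defs
  imports "HOL-Complex_Analysis.Complex_Analysis"
begin

definition collatzT :: "int \<Rightarrow> int" where
  "collatzT n = (if odd n then (3 * n + 1) div 2 else n div 2)"

definition collatz_conjecture :: bool where
  "collatz_conjecture \<longleftrightarrow> (\<forall>n::int. n > 0 \<longrightarrow> (\<exists>k::nat. (collatzT ^^ k) n = 1))"

text \<open>The Collatz map restricted to natural numbers (it maps nat to nat).\<close>
definition collatzN :: "nat \<Rightarrow> nat" where
  "collatzN n = nat (collatzT (int n))"

text \<open>Bergman space on the unit disk: holomorphic functions with square-integrable modulus.
  Functions are only considered on the disk (values outside are irrelevant).\<close>
definition bergman :: "(complex \<Rightarrow> complex) set" where
  "bergman = {f. f holomorphic_on ball 0 1 \<and>
                 set_integrable lborel (ball 0 1) (\<lambda>z. (cmod (f z))\<^sup>2)}"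

definition bnorm :: "(complex \<Rightarrow> complex) \<Rightarrow> real" where
  "bnorm f = sqrt (set_lebesgue_integral lborel (ball 0 1) (\<lambda>z. (cmod (f z))\<^sup>2))"

definition tcoeff :: "(complex \<Rightarrow> complex) \<Rightarrow> nat \<Rightarrow> complex" where
  "tcoeff f n = (deriv ^^ n) f 0 / of_nat (fact n)"

definition collatzOp :: "(complex \<Rightarrow> complex) \<Rightarrow> (complex \<Rightarrow> complex)" where
  "collatzOp f = (\<lambda>z. \<Sum>n. tcoeff f n * z ^ collatzN n)"

definition inX :: "(complex \<Rightarrow> complex) \<Rightarrow> bool" where
  "inX g \<longleftrightarrow> (\<exists>c0 c1 c2. \<forall>z\<in>ball 0 1. g z = c0 + c1 * z + c2 * z\<^sup>2)"

end

theory Submission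
  imports Defs
begin

definition cpx :: "real \<times> real \<Rightarrow> complex" where "cpx p = Complex (fst p) (snd p)"

lemma cpx_measurable[measurable]: "cpx \<in> borel_measurable borel"
  unfolding cpx_def by (intro borel_measurable_continuous_onI) (auto intro!: continuous_intros simp: Complex_eq)

lemma lborel_complex: "lborel = distr lborel borel cpx"
proof (rule lborel_eqI)
  fix l u :: complex
  assume le: "\<And>b. b \<in> Basis \<Longrightarrow> l \<bullet> b \<le> u \<bullet> b"
  have "cpx -` box l u = box (Re l, Im l) (Re u, Im u)"
    by (auto simp: cpx_def box_def Basis_complex_def Basis_prod_def inner_complex_def)
  moreover have "\<forall>b\<in>Basis. (Re l, Im l) \<bullet> b \<le> (Re u, Im u) \<bullet> b"
    using le[of 1] le[of \<i>] by (auto simp: Basis_complex_def Basis_prod_def inner_complex_def)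
  ultimately show "emeasure (distr lborel borel cpx) (box l u) = (\<Prod>b\<in>Basis. (u - l) \<bullet> b)"
    by (simp add: emeasure_distr emeasure_lborel_box_eq Basis_complex_def Basis_prod_def inner_complex_def
       prod.insert)
qed simp



definition shy :: "real \<Rightarrow> real \<times> real \<Rightarrow> real \<times> real" where
  "shy c p = (fst p, snd p + c * fst p)"

lemma shy_measurable[measurable]: "shy c \<in> borel_measurable borel"
  unfolding shy_def by (intro borel_measurable_continuous_onI) (auto intro!: continuous_intros)

lemma lborel_shy: "distr lborel borel (shy c) = (lborel :: (real \<times> real) measure)"
proof -
  have P: "(lborel :: (real \<times> real) measure) = lborel \<Otimes>\<^sub>M lborel" by (simp add: lborel_prod)
  have SP: "sets (lborel \<Otimes>\<^sub>M lborel) = sets (lborel :: (real \<times> real) measure)" by (simp only: lborel_prod)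
  show ?thesis
  proof (rule measure_eqI)
    show "sets (distr lborel borel (shy c)) = sets (lborel :: (real \<times> real) measure)" by simp
    fix A assume A: "A \<in> sets (distr lborel borel (shy c))"
    then have Ab: "A \<in> sets (lborel \<Otimes>\<^sub>M lborel)" by (simp only: SP sets_distr sets_lborel)
    have Ab': "shy c -` A \<in> sets (lborel \<Otimes>\<^sub>M lborel)"
      using measurable_sets[OF shy_measurable, of A c] A unfolding SP sets_distr sets_lborel by simp
    have "emeasure (distr lborel borel (shy c)) A = emeasure (lborel \<Otimes>\<^sub>M lborel) (shy c -` A)"
      using A by (simp add: emeasure_distr P[symmetric])
    also have "\<dots> = (\<integral>\<^sup>+x. emeasure lborel (Pair x -` (shy c -` A)) \<partial>lborel)"
      using Ab' by (rule lborel.emeasure_pair_measure_alt)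
    also have "\<dots> = (\<integral>\<^sup>+x. emeasure lborel (Pair x -` A) \<partial>lborel)"
    proof (rule nn_integral_cong)
      fix x :: real
      have m: "Pair x -` A \<in> sets borel"
        using Ab by (metis sets_lborel sets_Pair1)
      have "Pair x -` (shy c -` A) = ((+) (c * x)) -` (Pair x -` A)"
        by (auto simp: shy_def add.commute)
      then show "emeasure lborel (Pair x -` (shy c -` A)) = emeasure lborel (Pair x -` A)"
      proof -
        have "emeasure (distr lborel borel ((+) (c * x))) (Pair x -` A) = emeasure lborel ((+) (c * x) -` Pair x -` A)"
          using m by (subst emeasure_distr) auto
        then show ?thesis using \<open>Pair x -` (shy c -` A) = _\<close> by (simp add: lborel_distr_plus)
      qed
    qed
    also have "\<dots> = emeasure (lborel \<Otimes>\<^sub>M lborel) A"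
      using Ab by (rule lborel.emeasure_pair_measure_alt[symmetric])
    finally show "emeasure (distr lborel borel (shy c)) A = emeasure lborel A"
      by (simp add: P)
  qed
qed

definition sw :: "real \<times> real \<Rightarrow> real \<times> real" where "sw p = (snd p, fst p)"

lemma sw_measurable[measurable]: "sw \<in> borel_measurable borel"
  unfolding sw_def by (intro borel_measurable_continuous_onI) (auto intro!: continuous_intros)

lemma lborel_sw: "distr lborel borel sw = (lborel :: (real \<times> real) measure)"
proof (rule lborel_eqI[symmetric])
  fix l u :: "real \<times> real"
  assume le: "\<And>b. b \<in> Basis \<Longrightarrow> l \<bullet> b \<le> u \<bullet> b"
  have "sw -` box l u = box (snd l, fst l) (snd u, fst u)"
    by (cases l, cases u) (auto simp: sw_def box_def Basis_prod_def inner_prod_def)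
  moreover have "\<forall>b\<in>Basis. (snd l, fst l) \<bullet> b \<le> (snd u, fst u) \<bullet> b"
    using le[of "(1,0)"] le[of "(0,1)"] by (cases l, cases u) (auto simp: Basis_prod_def inner_prod_def)
  ultimately show "emeasure (distr lborel borel sw) (box l u) = (\<Prod>b\<in>Basis. (u - l) \<bullet> b)"
    by (cases l, cases u) (simp add: emeasure_distr emeasure_lborel_box_eq Basis_prod_def prod.insert inner_prod_def)
qed simp

definition shx :: "real \<Rightarrow> real \<times> real \<Rightarrow> real \<times> real" where
  "shx c p = (fst p + c * snd p, snd p)"

lemma shx_eq: "shx c = sw \<circ> shy c \<circ> sw"
  by (auto simp: fun_eq_iff shx_def shy_def sw_def)

lemma shx_measurable[measurable]: "shx c \<in> borel_measurable borel"
  unfolding shx_def by (intro borel_measurable_continuous_onI) (auto intro!: continuous_intros)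

lemma lborel_shx: "distr lborel borel (shx c) = (lborel :: (real \<times> real) measure)"
proof -
  have "distr lborel borel (shx c) = distr (distr (distr lborel borel sw) borel (shy c)) borel sw"
    by (simp add: distr_distr shx_eq comp_assoc)
  also have "\<dots> = lborel" by (simp add: lborel_sw lborel_shy)
  finally show ?thesis .
qed

lemma lborel_rot:
  assumes "cos a \<noteq> -1"
  shows "distr lborel borel (\<lambda>z. cis a * z) = (lborel :: complex measure)"
proof -
  define t where "t = sin a / (1 + cos a)"
  define s where "s = sin a"
  have c1: "1 + cos a \<noteq> 0" using assms by linarith
  have ts: "t * s = 1 - cos a"
    using c1 sin_cos_squared_add[of a] unfolding t_def s_def
    by (simp add: field_simps power2_eq_square)
  have ts2: "2 * t - s * t * t = sin a"
  proof -
    have "2 * t - s * t * t = t * (2 - t * s)" by (simp add: algebra_simps)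
    also have "\<dots> = t * (1 + cos a)" using ts by simp
    also have "\<dots> = sin a" using c1 by (simp add: t_def)
    finally show ?thesis .
  qed
  have eq: "(\<lambda>z. cis a * z) \<circ> cpx = cpx \<circ> shx (-t) \<circ> shy s \<circ> shx (-t)"
  proof
    fix p :: "real \<times> real"
    obtain x y where p: "p = (x, y)" by force
    have r1: "(cpx \<circ> shx (-t) \<circ> shy s \<circ> shx (-t)) p = Complex (x * (1 - t * s) - y * (2 * t - s * t * t)) (s * x + y * (1 - s * t))"
      by (simp add: p cpx_def shx_def shy_def algebra_simps)
    have r2: "((\<lambda>z. cis a * z) \<circ> cpx) p = Complex (cos a * x - sin a * y) (sin a * x + cos a * y)"
      by (simp add: p cpx_def complex_eq_iff)
    have e3: "t * y + t * (y * cos a) = y * sin a"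
    proof -
      have "y * (t * (1 + cos a)) = y * sin a" using c1 by (simp add: t_def)
      then show ?thesis by (simp add: algebra_simps)
    qed
    have st: "s * t = 1 - cos a" using ts by (simp add: mult.commute)
    show "((\<lambda>z. cis a * z) \<circ> cpx) p = (cpx \<circ> shx (-t) \<circ> shy s \<circ> shx (-t)) p"
      unfolding r1 r2 ts ts2 st using e3 by (simp add: s_def algebra_simps)
  qed
  have "distr (lborel::complex measure) borel (\<lambda>z. cis a * z) = distr (distr lborel borel cpx) borel (\<lambda>z. cis a * z)"
    by (simp add: lborel_complex[symmetric])
  also have "\<dots> = distr lborel borel (cpx \<circ> shx (-t) \<circ> shy s \<circ> shx (-t))"
    by (subst distr_distr) (auto simp: eq)
  also have "\<dots> = distr (distr (distr (distr lborel borel (shx (-t))) borel (shy s)) borel (shx (-t))) borel cpx"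
    by (simp add: distr_distr comp_assoc)
  also have "\<dots> = lborel" by (simp add: lborel_shx lborel_shy lborel_complex[symmetric])
  finally show ?thesis .
qed

lemma rot_integral:
  fixes g :: "complex \<Rightarrow> complex"
  assumes "cos a \<noteq> -1" and [measurable]: "g \<in> borel_measurable borel"
  shows "integral\<^sup>L lborel (\<lambda>z. g (cis a * z)) = integral\<^sup>L lborel g"
proof -
  have "integral\<^sup>L lborel g = integral\<^sup>L (distr lborel borel (\<lambda>z. cis a * z)) g"
    using lborel_rot[OF assms(1)] by simp
  also have "\<dots> = integral\<^sup>L lborel (\<lambda>z. g (cis a * z))"
    by (rule integral_distr) auto
  finally show ?thesis by simp
qed

lemma ortho:
  assumes "j \<noteq> k"
  shows "set_lebesgue_integral lborel (ball 0 r) (\<lambda>z::complex. z ^ j * cnj z ^ k) = 0"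
proof -
  define m where "m = (if j > k then j - k else k - j)"
  have m: "m > 0" using assms by (auto simp: m_def)
  define a where "a = pi / (2 * m)"
  have a0: "0 < a" "a \<le> pi / 2" using m by (auto simp: a_def field_simps)
  have ca: "cos a \<noteq> -1"
  proof
    assume "cos a = -1"
    moreover have "cos a \<ge> 0" using a0 by (intro cos_ge_zero) auto
    ultimately show False by simp
  qed
  define c where "c = cis a ^ j * cnj (cis a) ^ k"
  have c1: "c \<noteq> 1"
  proof
    assume "c = 1"
    have cc: "cnj (cis a) = cis (-a)" by (simp add: cis_cnj)
    have "c = cis (a * j - a * k)"
      unfolding c_def cc Complex.DeMoivre cis_mult by (simp add: algebra_simps)
    moreover have "a * j - a * k = pi / 2 \<or> a * j - a * k = - (pi / 2)"
    proof (cases "j > k")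
      case True
      then have "a * j - a * k = a * m" by (simp add: m_def of_nat_diff algebra_simps)
      then show ?thesis using m by (simp add: a_def)
    next
      case False
      then have "a * j - a * k = - (a * m)" using assms by (simp add: m_def of_nat_diff algebra_simps)
      then show ?thesis using m by (simp add: a_def)
    qed
    ultimately have "c = cis (pi/2) \<or> c = cis (- (pi/2))" by metis
    then have "c = \<i> \<or> c = - \<i>" by (auto simp: complex_eq_iff)
    with \<open>c = 1\<close> show False by (auto simp: complex_eq_iff)
  qed
  define F where "F z = indicator (ball 0 r) z *\<^sub>R (z ^ j * cnj z ^ k)" for z :: complex
  have Fm[measurable]: "F \<in> borel_measurable borel" unfolding F_def
    by (intro borel_measurable_scaleR borel_measurable_indicator borel_measurable_continuous_onI) (auto intro!: continuous_intros)
  have FR: "F (cis a * z) = c * F z" for z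
    by (simp add: F_def c_def norm_mult indicator_def power_mult_distrib)
  have "integral\<^sup>L lborel F = integral\<^sup>L lborel (\<lambda>z. F (cis a * z))"
    using rot_integral[OF ca Fm] by simp
  also have "\<dots> = c * integral\<^sup>L lborel F" by (simp add: FR)
  finally have "(1 - c) * integral\<^sup>L lborel F = 0" by (simp add: algebra_simps)
  then have "integral\<^sup>L lborel F = 0" using c1 by simp
  moreover have "F = (\<lambda>z. indicator (ball 0 r) z *\<^sub>R (z ^ j * cnj z ^ k))" by (simp add: fun_eq_iff F_def)
  ultimately show ?thesis by (simp add: set_lebesgue_integral_def)
qed

lemma ortho_if:
  "set_lebesgue_integral lborel (ball 0 r) (\<lambda>z::complex. z ^ j * cnj z ^ k) =
    (if j = k then set_lebesgue_integral lborel (ball 0 r) (\<lambda>z::complex. z ^ j * cnj z ^ j) else 0)"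
  using ortho[of j k r] by auto

lemma cont_set_integrable:
  fixes g :: "complex \<Rightarrow> 'b::{banach, second_countable_topology}"
  assumes "continuous_on UNIV g"
  shows "set_integrable lborel (ball 0 r) g"
proof -
  have "set_integrable lborel (cball 0 r) g"
    unfolding set_integrable_def
    by (rule borel_integrable_compact) (auto intro: continuous_on_subset[OF assms])
  then show ?thesis by (rule set_integrable_subset) auto
qed

definition W :: "nat \<Rightarrow> real \<Rightarrow> real" where
  "W n r = set_lebesgue_integral lborel (ball (0::complex) r) (\<lambda>z. (cmod z) ^ (2 * n))"

lemma W_complex: "set_lebesgue_integral lborel (ball 0 r) (\<lambda>z::complex. z ^ n * cnj z ^ n) = complex_of_real (W n r)"
proof -
  have "(\<lambda>z::complex. z ^ n * cnj z ^ n) = (\<lambda>z. complex_of_real ((cmod z) ^ (2 * n)))"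
  proof
    fix z :: complex
    have "z^n * cnj z^n = (z * cnj z)^n" by (simp add: power_mult_distrib)
    also have "\<dots> = (complex_of_real ((cmod z)^2))^n" by (simp only: complex_norm_square)
    also have "\<dots> = complex_of_real ((cmod z)^(2*n))" by (simp add: power_mult)
    finally show "z^n * cnj z^n = complex_of_real ((cmod z)^(2*n))" .
  qed
  then show ?thesis unfolding W_def by (simp only: set_integral_complex_of_real)
qed

lemma sum_set_integral:
  fixes f :: "'i \<Rightarrow> complex \<Rightarrow> complex"
  assumes "finite I" "\<And>i. i \<in> I \<Longrightarrow> set_integrable lborel A (f i)"
  shows "set_lebesgue_integral lborel A (\<lambda>z. \<Sum>i\<in>I. f i z) = (\<Sum>i\<in>I. set_lebesgue_integral lborel A (f i))"
  using assms unfolding set_lebesgue_integral_def set_integrable_def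
  by (simp only: scaleR_sum_right) (rule Bochner_Integration.integral_sum, auto)

lemma sum_if_delta:
  fixes f :: "nat \<Rightarrow> complex"
  assumes "x \<in> {..<N}"
  shows "(\<Sum>k<N. f k * (if x = k then A else 0)) = f x * A"
proof -
  have "(\<lambda>k. f k * (if x = k then A else 0)) = (\<lambda>k. if k = x then f x * A else 0)" by auto
  then show ?thesis unfolding \<open>_ = _\<close> using assms by simp
qed

lemma fin_parseval:
  fixes a :: "nat \<Rightarrow> complex"
  shows "set_lebesgue_integral lborel (ball 0 r) (\<lambda>z. (cmod (\<Sum>n<N. a n * z ^ n))\<^sup>2) = (\<Sum>n<N. (cmod (a n))\<^sup>2 * W n r)"
proof -
  have ci: "set_integrable lborel (ball 0 r) (\<lambda>z::complex. c * (z ^ j * cnj z ^ k))" for c j k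
    by (rule cont_set_integrable) (auto intro!: continuous_intros)
  have oi: "set_lebesgue_integral lborel (ball 0 r) (\<lambda>z::complex. z ^ j * cnj z ^ k) = (if j = k then complex_of_real (W j r) else 0)" for j k
    using ortho[of j k r] W_complex[of r j] by auto
  have "complex_of_real (set_lebesgue_integral lborel (ball 0 r) (\<lambda>z. (cmod (\<Sum>n<N. a n * z ^ n))\<^sup>2))
     = set_lebesgue_integral lborel (ball 0 r) (\<lambda>z. complex_of_real ((cmod (\<Sum>n<N. a n * z ^ n))\<^sup>2))"
    by (rule set_integral_complex_of_real[symmetric])
  also have "\<dots> = set_lebesgue_integral lborel (ball 0 r)
       (\<lambda>z. \<Sum>j<N. \<Sum>k<N. (a j * cnj (a k)) * (z ^ j * cnj z ^ k))"
  proof -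
    have pw: "complex_of_real ((cmod (\<Sum>n<N. a n * z ^ n))\<^sup>2) = (\<Sum>j<N. \<Sum>k<N. (a j * cnj (a k)) * (z ^ j * cnj z ^ k))" for z
      by (simp only: complex_norm_square) (simp add: sum_product algebra_simps)
    show ?thesis by (simp only: pw)
  qed
  also have "\<dots> = (\<Sum>j<N. set_lebesgue_integral lborel (ball 0 r) (\<lambda>z. \<Sum>k<N. (a j * cnj (a k)) * (z ^ j * cnj z ^ k)))"
    by (rule sum_set_integral) (auto intro!: cont_set_integrable continuous_intros)
  also have "\<dots> = (\<Sum>j<N. \<Sum>k<N. set_lebesgue_integral lborel (ball 0 r) (\<lambda>z. (a j * cnj (a k)) * (z ^ j * cnj z ^ k)))"
    by (rule sum.cong[OF refl], rule sum_set_integral) (auto intro: ci)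
  also have "\<dots> = (\<Sum>j<N. \<Sum>k<N. (a j * cnj (a k)) * set_lebesgue_integral lborel (ball 0 r) (\<lambda>z. z ^ j * cnj z ^ k))"
    by simp
  also have "\<dots> = (\<Sum>j<N. (a j * cnj (a j)) * complex_of_real (W j r))"
    by (rule sum.cong[OF refl]) (simp only: oi sum_if_delta)
  also have "\<dots> = complex_of_real (\<Sum>n<N. (cmod (a n))\<^sup>2 * W n r)"
    by (simp only: of_real_sum of_real_mult complex_norm_square)
  finally show ?thesis by (simp only: of_real_eq_iff)
qed

lemma parseval_r:
  fixes c :: "nat \<Rightarrow> complex" and H :: "complex \<Rightarrow> complex"
  assumes sums: "\<And>z. z \<in> ball 0 1 \<Longrightarrow> (\<lambda>n. c n * z ^ n) sums H z"
    and r: "0 \<le> r" "r < 1"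
  shows "(\<lambda>n. (cmod (c n))\<^sup>2 * W n r) sums set_lebesgue_integral lborel (ball 0 r) (\<lambda>z. (cmod (H z))\<^sup>2)"
proof -
  define \<rho> where "\<rho> = (1 + r) / 2"
  have \<rho>: "r < \<rho>" "\<rho> < 1" using r by (auto simp: \<rho>_def)
  have "summable (\<lambda>n. c n * (complex_of_real \<rho>) ^ n)"
    using sums[of "complex_of_real \<rho>"] \<rho> r by (auto simp: sums_iff)
  then have "summable (\<lambda>n. norm (c n * (complex_of_real r) ^ n))"
    by (rule powser_insidea) (use \<rho> r in auto)
  then have sm: "summable (\<lambda>n. cmod (c n) * r ^ n)"
    using r by (simp add: norm_mult norm_power)
  define M where "M = (\<Sum>n. cmod (c n) * r ^ n)"
  define S where "S N z = (\<Sum>n<N. c n * z ^ n)" for N z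
  have bnd: "cmod (S N z) \<le> M" if "z \<in> ball 0 r" for N z
  proof -
    have "cmod (S N z) \<le> (\<Sum>n<N. cmod (c n) * cmod z ^ n)"
      unfolding S_def by (rule order_trans[OF norm_sum]) (simp add: norm_mult norm_power)
    also have "\<dots> \<le> (\<Sum>n<N. cmod (c n) * r ^ n)"
      using that by (intro sum_mono mult_left_mono power_mono) auto
    also have "\<dots> \<le> M" unfolding M_def
      by (rule sum_le_suminf[OF sm]) (use r in auto)
    finally show ?thesis .
  qed
  have M0: "0 \<le> M" unfolding M_def using r by (intro suminf_nonneg[OF sm]) auto
  define s where "s N z = indicator (ball 0 r) z *\<^sub>R (cmod (S N z))\<^sup>2" for N z
  define f where "f z = indicator (ball 0 r) z *\<^sub>R (cmod (H z))\<^sup>2" for z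
  have sm_meas: "s N \<in> borel_measurable lborel" for N
    unfolding s_def S_def
    by (intro borel_measurable_scaleR borel_measurable_indicator borel_measurable_continuous_onI) (auto intro!: continuous_intros)
  have lim: "(\<lambda>N. s N z) \<longlonglongrightarrow> f z" for z
  proof (cases "z \<in> ball 0 r")
    case True
    then have "z \<in> ball 0 1" using r by auto
    then have "(\<lambda>N. S N z) \<longlonglongrightarrow> H z" using sums[of z] by (simp add: sums_def S_def)
    then have "(\<lambda>N. (cmod (S N z))\<^sup>2) \<longlonglongrightarrow> (cmod (H z))\<^sup>2" by (intro tendsto_intros)
    then show ?thesis using True by (simp add: s_def f_def)
  next
    case False
    then show ?thesis by (simp add: s_def f_def)
  qed
  have f_meas: "f \<in> borel_measurable lborel"
    by (rule borel_measurable_LIMSEQ_real[OF lim sm_meas])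
  have w_int: "integrable lborel (\<lambda>z::complex. indicator (ball 0 r) z *\<^sub>R M\<^sup>2)"
    using cont_set_integrable[of "\<lambda>_. M\<^sup>2" r] by (simp add: set_integrable_def)
  have "(\<lambda>N. integral\<^sup>L lborel (s N)) \<longlonglongrightarrow> integral\<^sup>L lborel f"
  proof (rule integral_dominated_convergence[OF f_meas sm_meas w_int])
    show "AE z in lborel. (\<lambda>N. s N z) \<longlonglongrightarrow> f z" using lim by simp
    fix N show "AE z in lborel. norm (s N z) \<le> indicator (ball 0 r) z *\<^sub>R M\<^sup>2"
    proof (rule AE_I2)
      fix z show "norm (s N z) \<le> indicator (ball 0 r) z *\<^sub>R M\<^sup>2"
      proof (cases "z \<in> ball 0 r")
        case True
        then show ?thesis using bnd[OF True, of N]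
          by (simp add: s_def power_mono)
      qed (simp add: s_def)
    qed
  qed
  moreover have "integral\<^sup>L lborel (s N) = (\<Sum>n<N. (cmod (c n))\<^sup>2 * W n r)" for N
  proof -
    have "s N = (\<lambda>z. indicator (ball 0 r) z *\<^sub>R (cmod (\<Sum>n<N. c n * z ^ n))\<^sup>2)"
      by (simp add: fun_eq_iff s_def S_def)
    then show ?thesis using fin_parseval[where r=r and N=N and a=c] by (simp add: set_lebesgue_integral_def)
  qed
  moreover have "f = (\<lambda>z. indicator (ball 0 r) z *\<^sub>R (cmod (H z))\<^sup>2)"
    by (simp add: fun_eq_iff f_def)
  ultimately show ?thesis
    by (simp add: sums_def set_lebesgue_integral_def)
qed

definition rk :: "nat \<Rightarrow> real" where "rk k = 1 - 1 / (real k + 2)"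

lemma rk_pos: "0 < rk k" and rk_less: "rk k < 1"
  by (auto simp: rk_def field_simps)

lemma rk_mono: "i \<le> j \<Longrightarrow> rk i \<le> rk j"
  by (auto simp: rk_def field_simps)

lemma rk_lim: "rk \<longlonglongrightarrow> 1"
proof -
  have "(\<lambda>k. 1 / (real k + 2)) \<longlonglongrightarrow> 0"
  proof -
    have "(\<lambda>k. 1 / real (k + 2)) \<longlonglongrightarrow> 0"
      using LIMSEQ_ignore_initial_segment[OF lim_1_over_n, of 2] by simp
    then show ?thesis by (simp add: add.commute)
  qed
  then have "(\<lambda>k. 1 - 1 / (real k + 2)) \<longlonglongrightarrow> 1 - 0" by (intro tendsto_intros)
  then show ?thesis by (simp add: rk_def[abs_def])
qed

lemma ind_lim: "(\<lambda>k. indicator (ball (0::complex) (rk k)) z :: real) \<longlonglongrightarrow> indicator (ball 0 1) z"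
proof (cases "z \<in> ball 0 1")
  case True
  then have "norm z < 1" by simp
  then have "eventually (\<lambda>k. norm z < rk k) sequentially"
    using order_tendstoD(1)[OF rk_lim \<open>norm z < 1\<close>] by simp
  then have "eventually (\<lambda>k. indicator (ball (0::complex) (rk k)) z = (1::real)) sequentially"
    by eventually_elim (simp add: indicator_def)
  then show ?thesis using True by (simp add: tendsto_eventually)
next
  case False
  then have "z \<notin> ball 0 (rk k)" for k using rk_less[of k] by auto
  then show ?thesis using False by simp
qed

lemma set_int_lim:
  fixes F :: "complex \<Rightarrow> real"
  assumes int: "set_integrable lborel (ball 0 1) F"
  shows "(\<lambda>k. set_lebesgue_integral lborel (ball 0 (rk k)) F) \<longlonglongrightarrow> set_lebesgue_integral lborel (ball 0 1) F"
proof -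
  have m1: "(\<lambda>z. indicator (ball 0 1) z *\<^sub>R F z) \<in> borel_measurable lborel"
    using int by (simp add: set_integrable_def)
  have eq: "indicator (ball 0 (rk k)) z *\<^sub>R F z = indicator (ball (0::complex) (rk k)) z * (indicator (ball 0 1) z *\<^sub>R F z)" for k z
    using rk_less[of k] by (auto simp: indicator_def)
  have m2: "(\<lambda>z. indicator (ball 0 (rk k)) z *\<^sub>R F z) \<in> borel_measurable lborel" for k
    unfolding eq by (intro borel_measurable_times borel_measurable_indicator m1) auto
  have w: "integrable lborel (\<lambda>z. norm (indicator (ball 0 1) z *\<^sub>R F z))"
    using int by (simp add: set_integrable_def)
  show ?thesis unfolding set_lebesgue_integral_def
  proof (rule integral_dominated_convergence[OF m1 m2 w])
    show "AE z in lborel. (\<lambda>k. indicator (ball 0 (rk k)) z *\<^sub>R F z) \<longlonglongrightarrow> indicator (ball 0 1) z *\<^sub>R F z"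
      by (intro AE_I2 tendsto_scaleR ind_lim tendsto_const)
    fix k show "AE z in lborel. norm (indicator (ball 0 (rk k)) z *\<^sub>R F z) \<le> norm (indicator (ball 0 1) z *\<^sub>R F z)"
      using rk_less[of k] by (intro AE_I2) (auto simp: indicator_def)
  qed
qed

lemma set_int_mono:
  fixes F :: "complex \<Rightarrow> real"
  assumes int: "set_integrable lborel (ball 0 s) F" and nn: "\<And>z. z \<in> ball 0 s \<Longrightarrow> 0 \<le> F z" and "r \<le> s"
  shows "set_lebesgue_integral lborel (ball 0 r) F \<le> set_lebesgue_integral lborel (ball 0 s) F"
proof -
  have sub: "ball (0::complex) r \<subseteq> ball 0 s" using assms(3) by auto
  have int2: "set_integrable lborel (ball 0 r) F"
    by (rule set_integrable_subset[OF int]) (use sub in auto)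
  show ?thesis
    using int int2 unfolding set_lebesgue_integral_def set_integrable_def
    by (intro integral_mono) (use sub nn in \<open>auto simp: indicator_def\<close>)
qed

lemma W_int: "set_integrable lborel (ball 0 r) (\<lambda>z::complex. (cmod z) ^ (2 * n))"
  by (rule cont_set_integrable) (auto intro!: continuous_intros)

lemma W_nonneg: "0 \<le> W n r"
  unfolding W_def set_lebesgue_integral_def by (intro integral_nonneg_AE) (auto simp: indicator_def)

lemma W_mono: "r \<le> 1 \<Longrightarrow> W n r \<le> W n 1"
  unfolding W_def by (rule set_int_mono[OF W_int]) auto

lemma W_lim: "(\<lambda>k. W n (rk k)) \<longlonglongrightarrow> W n 1"
  unfolding W_def by (rule set_int_lim[OF W_int])

lemma dirB:
  fixes c :: "nat \<Rightarrow> complex" and H :: "complex \<Rightarrow> complex"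
  assumes sums: "\<And>z. z \<in> ball 0 1 \<Longrightarrow> (\<lambda>n. c n * z ^ n) sums H z"
    and int: "set_integrable lborel (ball 0 1) (\<lambda>z. (cmod (H z))\<^sup>2)"
  shows "summable (\<lambda>n. (cmod (c n))\<^sup>2 * W n 1)"
    and "(\<Sum>n. (cmod (c n))\<^sup>2 * W n 1) \<le> set_lebesgue_integral lborel (ball 0 1) (\<lambda>z. (cmod (H z))\<^sup>2)"
proof -
  let ?I = "set_lebesgue_integral lborel (ball 0 1) (\<lambda>z. (cmod (H z))\<^sup>2)"
  have ps: "(\<Sum>n<M. (cmod (c n))\<^sup>2 * W n 1) \<le> ?I" for M
  proof -
    have le: "(\<Sum>n<M. (cmod (c n))\<^sup>2 * W n (rk k)) \<le> ?I" for k
    proof -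
      have s: "(\<lambda>n. (cmod (c n))\<^sup>2 * W n (rk k)) sums set_lebesgue_integral lborel (ball 0 (rk k)) (\<lambda>z. (cmod (H z))\<^sup>2)"
        by (rule parseval_r[OF sums]) (use rk_pos[of k] rk_less[of k] in auto)
      have "(\<Sum>n<M. (cmod (c n))\<^sup>2 * W n (rk k)) \<le> set_lebesgue_integral lborel (ball 0 (rk k)) (\<lambda>z. (cmod (H z))\<^sup>2)"
        using s by (intro sum_le_suminf[where f="\<lambda>n. (cmod (c n))\<^sup>2 * W n (rk k)", simplified sums_unique[OF s, symmetric]])
           (auto simp: sums_iff W_nonneg)
      also have "\<dots> \<le> ?I"
        by (rule set_int_mono[OF int]) (use rk_less[of k] in auto)
      finally show ?thesis .
    qed
    have "(\<lambda>k. \<Sum>n<M. (cmod (c n))\<^sup>2 * W n (rk k)) \<longlonglongrightarrow> (\<Sum>n<M. (cmod (c n))\<^sup>2 * W n 1)"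
      by (intro tendsto_sum tendsto_mult tendsto_const W_lim)
    then show ?thesis using le by (intro LIMSEQ_le_const2) auto
  qed
  show sm: "summable (\<lambda>n. (cmod (c n))\<^sup>2 * W n 1)"
    by (rule summableI_nonneg_bounded[OF _ ps]) (simp add: W_nonneg)
  show "(\<Sum>n. (cmod (c n))\<^sup>2 * W n 1) \<le> ?I"
    using sm ps by (intro suminf_le_const) auto
qed

lemma cont_int_r:
  fixes H :: "complex \<Rightarrow> complex"
  assumes cont: "continuous_on (ball 0 1) H" and r: "r < 1"
  shows "set_integrable lborel (ball 0 r) (\<lambda>z. (cmod (H z))\<^sup>2)"
proof -
  have "cball 0 r \<subseteq> ball (0::complex) 1" using r by auto
  then have "continuous_on (cball 0 r) (\<lambda>z. (cmod (H z))\<^sup>2)"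
    by (intro continuous_intros continuous_on_subset[OF cont])
  then have "set_integrable lborel (cball 0 r) (\<lambda>z. (cmod (H z))\<^sup>2)"
    unfolding set_integrable_def by (intro borel_integrable_compact) auto
  then show ?thesis by (rule set_integrable_subset) auto
qed

lemma dirA:
  fixes c :: "nat \<Rightarrow> complex" and H :: "complex \<Rightarrow> complex"
  assumes sums: "\<And>z. z \<in> ball 0 1 \<Longrightarrow> (\<lambda>n. c n * z ^ n) sums H z"
    and cont: "continuous_on (ball 0 1) H"
    and sm: "summable (\<lambda>n. (cmod (c n))\<^sup>2 * W n 1)"
  shows "set_integrable lborel (ball 0 1) (\<lambda>z. (cmod (H z))\<^sup>2)"
    and "set_lebesgue_integral lborel (ball 0 1) (\<lambda>z. (cmod (H z))\<^sup>2) \<le> (\<Sum>n. (cmod (c n))\<^sup>2 * W n 1)"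
proof -
  let ?T = "\<Sum>n. (cmod (c n))\<^sup>2 * W n 1"
  define f where "f k z = indicator (ball 0 (rk k)) z *\<^sub>R (cmod (H z))\<^sup>2" for k z
  define J where "J k = set_lebesgue_integral lborel (ball 0 (rk k)) (\<lambda>z. (cmod (H z))\<^sup>2)" for k
  have fint: "integrable lborel (f k)" for k
    using cont_int_r[OF cont rk_less[of k]] unfolding set_integrable_def f_def[abs_def] .
  have fmono: "AE z in lborel. mono (\<lambda>k. f k z)"
  proof (rule AE_I2)
    fix z show "mono (\<lambda>k. f k z)"
    proof (rule monoI)
      fix i j :: nat assume "i \<le> j"
      then have "rk i \<le> rk j" by (rule rk_mono)
      then show "f i z \<le> f j z" by (auto simp: f_def indicator_def)
    qed
  qed
  have flim: "AE z in lborel. (\<lambda>k. f k z) \<longlonglongrightarrow> indicator (ball 0 1) z *\<^sub>R (cmod (H z))\<^sup>2"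
    unfolding f_def by (intro AE_I2 tendsto_scaleR ind_lim tendsto_const)
  have Jle: "J k \<le> ?T" for k
  proof -
    have s: "(\<lambda>n. (cmod (c n))\<^sup>2 * W n (rk k)) sums J k"
      unfolding J_def by (rule parseval_r[OF sums]) (use rk_pos[of k] rk_less[of k] in auto)
    have "J k = (\<Sum>n. (cmod (c n))\<^sup>2 * W n (rk k))" using s by (simp add: sums_iff)
    also have "\<dots> \<le> ?T"
      using s sm by (intro suminf_le) (auto simp: sums_iff intro!: mult_left_mono W_mono less_imp_le[OF rk_less])
    finally show ?thesis .
  qed
  have Jinc: "incseq J"
  proof (rule incseq_SucI)
    fix k
    show "J k \<le> J (Suc k)" unfolding J_def
      by (rule set_int_mono[OF cont_int_r[OF cont rk_less]]) (auto intro: rk_mono)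
  qed
  have Jlim: "J \<longlonglongrightarrow> (SUP k. J k)"
    by (rule LIMSEQ_incseq_SUP[OF _ Jinc]) (use Jle in \<open>auto intro!: bdd_aboveI[where M="\<Sum>n. (cmod (c n))\<^sup>2 * W n 1"]\<close>)
  have Jf: "integral\<^sup>L lborel (f k) = J k" for k
    by (simp add: J_def f_def[abs_def] set_lebesgue_integral_def)
  have umeas: "(\<lambda>z. indicator (ball 0 1) z *\<^sub>R (cmod (H z))\<^sup>2) \<in> borel_measurable lborel"
  proof -
    have "continuous_on (ball 0 1) (\<lambda>z. (cmod (H z))\<^sup>2)" by (intro continuous_intros cont)
    then show ?thesis
      using borel_measurable_continuous_on_indicator[of "ball (0::complex) 1" "\<lambda>z. (cmod (H z))\<^sup>2"] by simp
  qed
  have ilim: "(\<lambda>k. integral\<^sup>L lborel (f k)) \<longlonglongrightarrow> (SUP k. J k)"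
    using Jlim by (simp add: Jf)
  show "set_integrable lborel (ball 0 1) (\<lambda>z. (cmod (H z))\<^sup>2)"
    unfolding set_integrable_def by (rule integrable_monotone_convergence[OF fint fmono flim ilim umeas])
  have "set_lebesgue_integral lborel (ball 0 1) (\<lambda>z. (cmod (H z))\<^sup>2) = (SUP k. J k)"
    unfolding set_lebesgue_integral_def by (rule integral_monotone_convergence[OF fint fmono flim ilim umeas])
  also have "\<dots> \<le> ?T" by (rule cSUP_least) (auto simp: Jle)
  finally show "set_lebesgue_integral lborel (ball 0 1) (\<lambda>z. (cmod (H z))\<^sup>2) \<le> ?T" .
qed

lemma tcoeff_sums:
  fixes c :: "nat \<Rightarrow> complex" and H :: "complex \<Rightarrow> complex"
  assumes r: "0 < r" and sums: "\<And>z. z \<in> ball 0 r \<Longrightarrow> (\<lambda>n. c n * z ^ n) sums H z"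
  shows "tcoeff H n = c n"
proof -
  define F where "F = Abs_fps c"
  have Fn: "fps_nth F = c" by (simp add: F_def Abs_fps_inverse)
  have "summable (\<lambda>n. c n * (complex_of_real (r/2)) ^ n)"
    using sums[of "complex_of_real (r/2)"] r by (auto simp: sums_iff)
  then have "conv_radius c \<ge> norm (complex_of_real (r/2))" by (rule conv_radius_geI)
  then have "fps_conv_radius F > 0" using r
    by (simp add: fps_conv_radius_def Fn) (meson ereal_less(2) half_gt_zero less_le_trans)
  moreover have "eventually (\<lambda>z. eval_fps F z = H z) (nhds 0)"
  proof -
    have "eventually (\<lambda>z. z \<in> ball 0 r) (nhds (0::complex))"
      using r by (intro eventually_nhds_in_open) auto
    then show ?thesis
    proof eventually_elim
      case (elim z)
      then show ?case using sums[OF elim] by (simp add: eval_fps_def Fn sums_iff)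
    qed
  qed
  ultimately have "H has_fps_expansion F" by (simp add: has_fps_expansion_def)
  then have "fps_nth F n = (deriv ^^ n) H 0 / fact n" by (rule fps_nth_fps_expansion)
  then show ?thesis by (simp add: tcoeff_def Fn)
qed

definition CPoly :: "(nat \<Rightarrow> complex) \<Rightarrow> (nat \<Rightarrow> nat) \<Rightarrow> nat set \<Rightarrow> complex \<Rightarrow> complex" where
  "CPoly c e F z = (\<Sum>k\<in>F. c k * z ^ e k)"

definition pcoef :: "(nat \<Rightarrow> complex) \<Rightarrow> (nat \<Rightarrow> nat) \<Rightarrow> nat set \<Rightarrow> nat \<Rightarrow> complex" where
  "pcoef c e F m = (\<Sum>k\<in>{k\<in>F. e k = m}. c k)"

lemma pcoef_zero: "m \<notin> e ` F \<Longrightarrow> pcoef c e F m = 0"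
  unfolding pcoef_def by (rule sum.neutral) auto

lemma pcoef_group:
  assumes "finite F"
  shows "(\<Sum>m\<in>e ` F. pcoef c e F m * z ^ h m) = (\<Sum>k\<in>F. c k * z ^ h (e k))"
proof -
  have "(\<Sum>m\<in>e ` F. pcoef c e F m * z ^ h m) = (\<Sum>m\<in>e ` F. \<Sum>k\<in>{k\<in>F. e k = m}. c k * z ^ h (e k))"
    unfolding pcoef_def sum_distrib_right by (intro sum.cong refl) auto
  also have "\<dots> = (\<Sum>k\<in>F. c k * z ^ h (e k))"
    by (rule sum.group) (use assms in auto)
  finally show ?thesis .
qed

lemma Poly_sums:
  assumes "finite F"
  shows "(\<lambda>m. pcoef c e F m * z ^ m) sums CPoly c e F z"
proof -
  have "(\<lambda>m. pcoef c e F m * z ^ m) sums (\<Sum>m\<in>e ` F. pcoef c e F m * z ^ m)"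
    by (rule sums_finite) (use assms pcoef_zero in auto)
  also have "(\<Sum>m\<in>e ` F. pcoef c e F m * z ^ m) = CPoly c e F z"
    using pcoef_group[OF assms, where e=e and c=c and z=z and h="\<lambda>m. m"] by (simp add: CPoly_def)
  finally show ?thesis .
qed

lemma tcoeff_Poly: "finite F \<Longrightarrow> tcoeff (CPoly c e F) m = pcoef c e F m"
  by (rule tcoeff_sums[of 1]) (auto intro: Poly_sums)

lemma collatzOp_Poly:
  assumes "finite F"
  shows "collatzOp (CPoly c e F) = CPoly c (collatzN \<circ> e) F"
proof
  fix z
  have "collatzOp (CPoly c e F) z = (\<Sum>m. pcoef c e F m * z ^ collatzN m)"
    by (simp add: collatzOp_def tcoeff_Poly[OF assms])
  also have "\<dots> = (\<Sum>m\<in>e ` F. pcoef c e F m * z ^ collatzN m)"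
    by (rule suminf_finite) (use assms pcoef_zero in auto)
  also have "\<dots> = CPoly c (collatzN \<circ> e) F z"
    using pcoef_group[OF assms, where e=e and c=c and z=z and h=collatzN] by (simp add: CPoly_def)
  finally show "collatzOp (CPoly c e F) z = CPoly c (collatzN \<circ> e) F z" .
qed

lemma collatzOp_iter_Poly:
  assumes "finite F"
  shows "(collatzOp ^^ n) (CPoly c id F) = CPoly c (collatzN ^^ n) F"
proof (induction n)
  case 0 then show ?case by simp
next
  case (Suc n)
  then show ?case by (simp add: collatzOp_Poly[OF assms] comp_def)
qed

lemma inX_Poly:
  assumes "finite F" "\<And>k. k \<in> F \<Longrightarrow> e k \<le> 2"
  shows "inX (CPoly c e F)"
proof -
  have sub: "e ` F \<subseteq> {0,1,2}" using assms(2) by force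
  have "CPoly c e F z = pcoef c e F 0 + pcoef c e F 1 * z + pcoef c e F 2 * z\<^sup>2" for z
  proof -
    have "CPoly c e F z = (\<Sum>m\<in>{0,1,2}. \<Sum>k\<in>{k\<in>F. e k = m}. c k * z ^ e k)"
      unfolding CPoly_def by (rule sum.group[symmetric]) (use assms sub in auto)
    also have "\<dots> = (\<Sum>m\<in>{0,1,2}. pcoef c e F m * z ^ m)"
      unfolding pcoef_def sum_distrib_right by (intro sum.cong refl) auto
    also have "\<dots> = pcoef c e F 0 + pcoef c e F 1 * z + pcoef c e F 2 * z\<^sup>2"
      by (simp add: algebra_simps)
    finally show ?thesis .
  qed
  then show ?thesis unfolding inX_def by blast
qed

lemma collatzT_nonneg: "0 \<le> n \<Longrightarrow> 0 \<le> collatzT n"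
  by (simp add: collatzT_def)

lemma collatzN_iter: "int ((collatzN ^^ j) n) = (collatzT ^^ j) (int n)"
proof (induction j)
  case 0 then show ?case by simp
next
  case (Suc j)
  have "0 \<le> (collatzT ^^ j) (int n)" using Suc by (metis of_nat_0_le_iff)
  then show ?case using Suc by (simp add: collatzN_def collatzT_nonneg)
qed

lemma collatzN_small: "m \<le> 2 \<Longrightarrow> collatzN m \<le> 2"
proof -
  assume "m \<le> 2"
  then have "m = 0 \<or> m = 1 \<or> m = 2" by auto
  then show ?thesis by (auto simp: collatzN_def collatzT_def)
qed

lemma collatzN_small_iter: "m \<le> 2 \<Longrightarrow> (collatzN ^^ i) m \<le> 2"
  by (induction i) (auto intro: collatzN_small)

lemma collatz_reach:
  assumes conj: collatz_conjecture
  shows "\<exists>j. \<forall>i\<ge>j. (collatzN ^^ i) k \<le> 2"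
proof -
  obtain j where j: "(collatzN ^^ j) k \<le> 2"
  proof (cases "k = 0")
    case True then show ?thesis using that[of 0] by simp
  next
    case False
    then obtain j where "(collatzT ^^ j) (int k) = 1" using conj unfolding collatz_conjecture_def by force
    then have "(collatzN ^^ j) k = 1" using collatzN_iter[of j k] by simp
    then show ?thesis using that[of j] by simp
  qed
  have "(collatzN ^^ i) k \<le> 2" if "i \<ge> j" for i
  proof -
    have "(collatzN ^^ i) k = (collatzN ^^ (i - j)) ((collatzN ^^ j) k)"
      using that by (metis funpow_add le_add_diff_inverse2 o_apply)
    then show ?thesis using collatzN_small_iter[OF j] by simp
  qed
  then show ?thesis by blast
qed

lemma collatz_poly:
  assumes conj: collatz_conjecture and F: "finite F"
  shows "\<exists>n\<ge>1. inX ((collatzOp ^^ n) (CPoly c id F))"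
proof -
  have "\<forall>k\<in>F. \<exists>j. \<forall>i\<ge>j. (collatzN ^^ i) k \<le> 2" using collatz_reach[OF conj] by blast
  then obtain J where J: "\<And>k i. k \<in> F \<Longrightarrow> i \<ge> J k \<Longrightarrow> (collatzN ^^ i) k \<le> 2" by metis
  define n where "n = Suc (\<Sum>k\<in>F. J k)"
  have "J k \<le> n" if "k \<in> F" for k
    using member_le_sum[OF that, of J] F by (simp add: n_def)
  then have "inX (CPoly c (collatzN ^^ n) F)"
    by (intro inX_Poly F J) auto
  moreover have "(collatzOp ^^ n) (CPoly c id F) = CPoly c (collatzN ^^ n) F" by (rule collatzOp_iter_Poly[OF F])
  moreover have "1 \<le> n" by (simp add: n_def)
  ultimately show ?thesis by metis
qed

lemma bergman_sums:
  assumes "f holomorphic_on ball 0 1" "z \<in> ball 0 1"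
  shows "(\<lambda>n. tcoeff f n * z ^ n) sums f z"
  using holomorphic_power_series[OF assms] by (simp add: tcoeff_def)

lemma collatzN_double: "collatzN (2 * m) = m"
  by (simp add: collatzN_def collatzT_def)

lemma part1:
  assumes g: "g \<in> bergman"
  shows "\<exists>f\<in>bergman. inX (\<lambda>z. collatzOp f z - g z)"
proof -
  have holg: "g holomorphic_on ball 0 1" and intg: "set_integrable lborel (ball 0 1) (\<lambda>z. (cmod (g z))\<^sup>2)"
    using g by (auto simp: bergman_def)
  define a where "a = tcoeff g"
  have sums_g: "z \<in> ball 0 1 \<Longrightarrow> (\<lambda>n. a n * z ^ n) sums g z" for z
    unfolding a_def by (rule bergman_sums[OF holg])
  define h where "h z = g (z\<^sup>2)" for z
  define b where "b n = (if even n then a (n div 2) else 0)" for n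
  have sm2: "strict_mono (\<lambda>m::nat. 2 * m)" by (auto simp: strict_mono_def)
  have sums_h: "(\<lambda>n. b n * z ^ n) sums h z" if z: "z \<in> ball 0 1" for z
  proof -
    have "z\<^sup>2 \<in> ball 0 1" using z by (simp add: norm_power power_less_one_iff abs_square_less_1)
    then have "(\<lambda>m. a m * (z\<^sup>2) ^ m) sums h z" unfolding h_def by (rule sums_g)
    moreover have "(\<lambda>m. b (2 * m) * z ^ (2 * m)) = (\<lambda>m. a m * (z\<^sup>2) ^ m)"
      by (auto simp: b_def power_mult fun_eq_iff)
    ultimately have "(\<lambda>m. b (2 * m) * z ^ (2 * m)) sums h z" by simp
    then show ?thesis
      by (subst (asm) sums_mono_reindex[OF sm2, where f="\<lambda>n. b n * z ^ n"]) (auto simp: b_def)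
  qed
  have holh: "h holomorphic_on ball 0 1"
  proof -
    have "(g \<circ> (\<lambda>z. z\<^sup>2)) holomorphic_on ball 0 1"
    proof (rule holomorphic_on_compose_gen[OF _ holg])
      show "(\<lambda>z::complex. z\<^sup>2) holomorphic_on ball 0 1" by (intro holomorphic_intros)
      show "(\<lambda>z::complex. z\<^sup>2) ` ball 0 1 \<subseteq> ball 0 1"
        by (auto simp: norm_power power_less_one_iff abs_square_less_1)
    qed
    then show ?thesis by (simp add: h_def[abs_def] comp_def)
  qed
  have smg: "summable (\<lambda>n. (cmod (a n))\<^sup>2 * W n 1)"
    by (rule dirB(1)[OF sums_g intg])
  have W2: "W (2 * m) 1 \<le> W m 1" for m
    unfolding W_def
  proof (rule set_integral_mono[OF W_int W_int])
    fix z :: complex assume "z \<in> ball 0 1"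
    then have "cmod z \<le> 1" by simp
    then show "cmod z ^ (2 * (2 * m)) \<le> cmod z ^ (2 * m)"
      by (intro power_decreasing) auto
  qed
  have smb: "summable (\<lambda>n. (cmod (b n))\<^sup>2 * W n 1)"
  proof -
    have "summable (\<lambda>m. (cmod (b (2 * m)))\<^sup>2 * W (2 * m) 1)"
    proof (rule summable_comparison_test'[OF smg])
      fix m :: nat
      show "norm ((cmod (b (2 * m)))\<^sup>2 * W (2 * m) 1) \<le> (cmod (a m))\<^sup>2 * W m 1"
        using W2[of m] W_nonneg[of "2*m" 1] by (simp add: b_def mult_left_mono)
    qed
    then obtain s where s: "(\<lambda>m. (cmod (b (2 * m)))\<^sup>2 * W (2 * m) 1) sums s" by (auto simp: summable_def)
    have zero: "(cmod (b n))\<^sup>2 * W n 1 = 0" if "n \<notin> range (\<lambda>m::nat. 2 * m)" for n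
      using that by (auto simp: b_def elim!: evenE)
    have "(\<lambda>m. (cmod (b (2 * m)))\<^sup>2 * W (2 * m) 1) sums s \<longleftrightarrow> (\<lambda>n. (cmod (b n))\<^sup>2 * W n 1) sums s"
      by (rule sums_mono_reindex[OF sm2]) (rule zero)
    then have "(\<lambda>n. (cmod (b n))\<^sup>2 * W n 1) sums s" using s by simp
    then show ?thesis by (auto simp: summable_def)
  qed
  have inth: "set_integrable lborel (ball 0 1) (\<lambda>z. (cmod (h z))\<^sup>2)"
    by (rule dirA(1)[OF sums_h holomorphic_on_imp_continuous_on[OF holh] smb])
  have hb: "h \<in> bergman" using holh inth by (simp add: bergman_def)
  have tch: "tcoeff h n = b n" for n
    by (rule tcoeff_sums[of 1]) (auto intro: sums_h)
  have op: "collatzOp h z = g z" if z: "z \<in> ball 0 1" for z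
  proof -
    have "(\<lambda>m. b (2 * m) * z ^ collatzN (2 * m)) = (\<lambda>m. a m * z ^ m)"
      by (auto simp: b_def collatzN_double fun_eq_iff)
    then have "(\<lambda>m. b (2 * m) * z ^ collatzN (2 * m)) sums g z" using sums_g[OF z] by simp
    then have "(\<lambda>n. b n * z ^ collatzN n) sums g z"
      by (subst (asm) sums_mono_reindex[OF sm2, where f="\<lambda>n. b n * z ^ collatzN n"]) (auto simp: b_def)
    then show ?thesis by (simp add: collatzOp_def tch sums_iff)
  qed
  have "inX (\<lambda>z. collatzOp h z - g z)"
    unfolding inX_def by (rule exI[of _ 0], rule exI[of _ 0], rule exI[of _ 0]) (simp add: op)
  then show ?thesis using hb by blast
qed

lemma CPoly_bergman: "CPoly c id F \<in> bergman"
proof -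
  have "CPoly c id F holomorphic_on ball 0 1"
    unfolding CPoly_def[abs_def] by (intro holomorphic_intros)
  moreover have "set_integrable lborel (ball 0 1) (\<lambda>z. (cmod (CPoly c id F z))\<^sup>2)"
    unfolding CPoly_def by (intro cont_set_integrable continuous_intros)
  ultimately show ?thesis by (simp add: bergman_def)
qed

lemma part2:
  assumes conj: collatz_conjecture and f: "f \<in> bergman" and e: "\<epsilon> > 0"
  shows "\<exists>n\<ge>1. \<exists>g\<in>bergman. inX ((collatzOp ^^ n) g) \<and>
            (\<exists>p. inX p \<and> bnorm (\<lambda>z. f z - g z - p z) < \<epsilon>)"
proof -
  have holf: "f holomorphic_on ball 0 1" and intf: "set_integrable lborel (ball 0 1) (\<lambda>z. (cmod (f z))\<^sup>2)"
    using f by (auto simp: bergman_def)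
  define a where "a = tcoeff f"
  have sums_f: "z \<in> ball 0 1 \<Longrightarrow> (\<lambda>n. a n * z ^ n) sums f z" for z
    unfolding a_def by (rule bergman_sums[OF holf])
  define t where "t n = (cmod (a n))\<^sup>2 * W n 1" for n
  have smf: "summable t" unfolding t_def by (rule dirB(1)[OF sums_f intf])
  have "(\<lambda>N. \<Sum>n<N. t n) \<longlonglongrightarrow> suminf t" by (rule summable_LIMSEQ[OF smf])
  moreover have "\<epsilon>\<^sup>2 / 4 > 0" using e by simp
  ultimately obtain N where N: "norm ((\<Sum>n<N. t n) - suminf t) < \<epsilon>\<^sup>2 / 4"
    by (meson LIMSEQ_iff order_refl)
  define P where "P = CPoly a id {..<N}"
  define c where "c n = (if n < N then 0 else a n)" for n
  have sums_c: "(\<lambda>n. c n * z ^ n) sums (f z - P z)" if z: "z \<in> ball 0 1" for z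
  proof -
    have "(\<lambda>n. if n \<in> {..<N} then a n * z ^ n else 0) sums (\<Sum>n\<in>{..<N}. a n * z ^ n)"
      by (rule sums_If_finite_set) simp
    from sums_diff[OF sums_f[OF z] this]
    have "(\<lambda>n. a n * z ^ n - (if n \<in> {..<N} then a n * z ^ n else 0)) sums (f z - P z)"
      by (simp add: P_def CPoly_def)
    moreover have "(\<lambda>n. a n * z ^ n - (if n \<in> {..<N} then a n * z ^ n else 0)) = (\<lambda>n. c n * z ^ n)"
      by (auto simp: c_def fun_eq_iff)
    ultimately show ?thesis by simp
  qed
  have contH: "continuous_on (ball 0 1) (\<lambda>z. f z - P z)"
    unfolding P_def CPoly_def
    by (intro continuous_intros holomorphic_on_imp_continuous_on[OF holf])
  have sums_tc: "(\<lambda>n. (cmod (c n))\<^sup>2 * W n 1) sums (suminf t - (\<Sum>n<N. t n))"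
  proof -
    have "(\<lambda>n. if n \<in> {..<N} then t n else 0) sums (\<Sum>n\<in>{..<N}. t n)"
      by (rule sums_If_finite_set) simp
    from sums_diff[OF summable_sums[OF smf] this]
    have "(\<lambda>n. t n - (if n \<in> {..<N} then t n else 0)) sums (suminf t - (\<Sum>n<N. t n))" by simp
    moreover have "(\<lambda>n. t n - (if n \<in> {..<N} then t n else 0)) = (\<lambda>n. (cmod (c n))\<^sup>2 * W n 1)"
      by (auto simp: c_def t_def fun_eq_iff)
    ultimately show ?thesis by simp
  qed
  have I_le: "set_lebesgue_integral lborel (ball 0 1) (\<lambda>z. (cmod (f z - P z))\<^sup>2) \<le> suminf t - (\<Sum>n<N. t n)"
    using dirA(2)[OF sums_c contH sums_summable[OF sums_tc]] sums_unique[OF sums_tc] by simp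
  have "set_lebesgue_integral lborel (ball 0 1) (\<lambda>z. (cmod (f z - P z))\<^sup>2) < \<epsilon>\<^sup>2"
    using I_le N by (simp add: abs_if split: if_splits)
  then have "bnorm (\<lambda>z. f z - P z - 0) < \<epsilon>"
  proof -
    let ?I = "set_lebesgue_integral lborel (ball 0 1) (\<lambda>z. (cmod (f z - P z))\<^sup>2)"
    have "sqrt ?I < sqrt (\<epsilon>\<^sup>2)" by (rule real_sqrt_less_mono) fact
    also have "sqrt (\<epsilon>\<^sup>2) = \<epsilon>" using e by simp
    finally have "sqrt ?I < \<epsilon>" .
    then show ?thesis unfolding bnorm_def using e by simp
  qed
  moreover have "inX (\<lambda>z. 0)" unfolding inX_def by (rule exI[of _ 0], rule exI[of _ 0], rule exI[of _ 0]) simp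
  moreover obtain n where "n \<ge> 1" "inX ((collatzOp ^^ n) P)"
    using collatz_poly[OF conj, of "{..<N}" a] by (auto simp: P_def)
  moreover have "P \<in> bergman" by (simp add: P_def CPoly_bergman)
  ultimately show ?thesis by blast
qed

theorem mainTheorem1:
  shows "(\<forall>g\<in>bergman. \<exists>f\<in>bergman. inX (\<lambda>z. collatzOp f z - g z))
    \<and> (collatz_conjecture \<longrightarrow>
        (\<forall>f\<in>bergman. \<forall>\<epsilon>>0. \<exists>n\<ge>1. \<exists>g\<in>bergman.
            inX ((collatzOp ^^ n) g) \<and>
            (\<exists>p. inX p \<and> bnorm (\<lambda>z. f z - g z - p z) < \<epsilon>)))"
  using part1 part2 by blast


end
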